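(* Let $K$ be a field of characteristic zero, $W_n$ the Witt Lie algebra and $\sigma\in\mathrm{Aut}_{\mathrm{Lie}}(W_n)$. Then $A_\sigma\in\mathrm{GL}_n(\mathbb{Z})$.
   Context: $W_n=\mathrm{Der}_K(K[x_1^{\pm1},\ldots,x_n^{\pm1}])$, $\mathcal{H}_n=\bigoplus_iKH_i$, $H_i=x_i\partial_i$. Every Lie automorphism $\sigma$ of $W_n$ satisfies $\sigma(\mathcal{H}_n)=\mathcal{H}_n$, and $A_\sigma=(a_{ij})\in\mathrm{GL}_n(K)$ is the unique matrix with $\sigma(H_i)=\sum_ja_{ij}H_j$ for all $i$. *)

theory Defs
  imports "HOL-Analysis.Analysis" "HOL-Library.Poly_Mapping"
begin

text \<open>Laurent polynomial ring K[x_i^{+-1} : i in 'n]: finitely supported functions from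
  exponent vectors (finitely supported 'n => int) to K, with convolution product.\<close>
type_synonym ('n, 'k) laurent = "('n \<Rightarrow>\<^sub>0 int) \<Rightarrow>\<^sub>0 'k"

definition lconst :: "'k::comm_ring_1 \<Rightarrow> ('n, 'k) laurent" where
  "lconst c = Poly_Mapping.single 0 c"

definition is_derivation :: "(('n, 'k::field) laurent \<Rightarrow> ('n, 'k) laurent) \<Rightarrow> bool" where
  "is_derivation D \<longleftrightarrow>
     (\<forall>f g. D (f + g) = D f + D g) \<and>
     (\<forall>c f. D (lconst c * f) = lconst c * D f) \<and>
     (\<forall>f g. D (f * g) = f * D g + D f * g)"

definition Witt :: "(('n, 'k::field) laurent \<Rightarrow> ('n, 'k) laurent) set" where
  "Witt = {D. is_derivation D}"

definition lie_bracket ::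
  "(('n, 'k::field) laurent \<Rightarrow> ('n, 'k) laurent) \<Rightarrow> (('n, 'k) laurent \<Rightarrow> ('n, 'k) laurent)
   \<Rightarrow> ('n, 'k) laurent \<Rightarrow> ('n, 'k) laurent" where
  "lie_bracket D E = (\<lambda>f. D (E f) - E (D f))"

definition der_scale :: "'k::field \<Rightarrow> (('n, 'k) laurent \<Rightarrow> ('n, 'k) laurent)
   \<Rightarrow> ('n, 'k) laurent \<Rightarrow> ('n, 'k) laurent" where
  "der_scale c D = (\<lambda>f. lconst c * D f)"

definition der_add :: "(('n, 'k::field) laurent \<Rightarrow> ('n, 'k) laurent) \<Rightarrow> (('n, 'k) laurent \<Rightarrow> ('n, 'k) laurent)
   \<Rightarrow> ('n, 'k) laurent \<Rightarrow> ('n, 'k) laurent" where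
  "der_add D E = (\<lambda>f. D f + E f)"

definition witt_lie_aut ::
  "((('n, 'k::field) laurent \<Rightarrow> ('n, 'k) laurent) \<Rightarrow> (('n, 'k) laurent \<Rightarrow> ('n, 'k) laurent)) \<Rightarrow> bool" where
  "witt_lie_aut \<sigma> \<longleftrightarrow>
     bij_betw \<sigma> Witt Witt \<and>
     (\<forall>D\<in>Witt. \<forall>E\<in>Witt. \<sigma> (der_add D E) = der_add (\<sigma> D) (\<sigma> E)) \<and>
     (\<forall>c. \<forall>D\<in>Witt. \<sigma> (der_scale c D) = der_scale c (\<sigma> D)) \<and>
     (\<forall>D\<in>Witt. \<forall>E\<in>Witt. \<sigma> (lie_bracket D E) = lie_bracket (\<sigma> D) (\<sigma> E))"

text \<open>H_i = x_i d/dx_i, acting by x^a \<mapsto> a_i x^a.\<close>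
definition Hder :: "'n \<Rightarrow> ('n, 'k::field) laurent \<Rightarrow> ('n, 'k) laurent" where
  "Hder i = (\<lambda>f. Poly_Mapping.mapp (\<lambda>a c. of_int (Poly_Mapping.lookup a i) * c) f)"

end

theory Submission
  imports Defs
begin



abbreviation lk where "lk \<equiv> Poly_Mapping.lookup"
abbreviation kys where "kys \<equiv> Poly_Mapping.keys"

definition mon :: "('n \<Rightarrow>\<^sub>0 int) \<Rightarrow> ('n, 'k::comm_ring_1) laurent" where
  "mon a = Poly_Mapping.single a 1"

lemma lookup_lconst_mult: "lk (lconst c * p) x = c * lk p x"
proof -
  have "lconst c * p = Poly_Mapping.map ((*) c) p"
    by (simp add: lconst_def mult_map_scale_conv_mult)
  then show ?thesis by (simp add: Poly_Mapping.map.rep_eq when_def)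
qed

lemma lookup_lconst_mult': "lk (p * lconst c) x = lk p x * c"
  using lookup_lconst_mult[of c p x] by (simp add: mult.commute)

lemma lconst_of_int: "lconst (of_int k) = of_int k" by (simp add: lconst_def)

lemma lconst_mult: "lconst a * lconst b = lconst (a * b)"
  by (simp add: lconst_def mult_single)
lemma lconst_add: "lconst (a + b) = lconst a + lconst b"
  by (simp add: lconst_def single_add)
lemma lconst_0[simp]: "lconst 0 = 0" by (simp add: lconst_def)
lemma lconst_1[simp]: "lconst 1 = 1" by (simp add: lconst_def)
lemma lookup_lconst: "lk (lconst c) x = (if x = 0 then c else 0)"
  by (simp add: lconst_def lookup_single when_def)
lemma mon_mult: "mon a * mon b = mon (a + b)"
  by (simp add: mon_def mult_single)
lemma mon_0[simp]: "mon 0 = 1" by (simp add: mon_def)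
lemma mon_inv: "mon (-a) * mon a = 1"
  by (simp add: mon_mult)
lemma lookup_mon: "lk (mon a) x = (if x = a then 1 else 0)"
  by (simp add: mon_def lookup_single when_def)
lemma lconst_mon: "lconst c * mon a = Poly_Mapping.single a c"
  by (simp add: lconst_def mon_def mult_single)

lemma expansion: "p = (\<Sum>a\<in>kys p. lconst (lk p a) * mon a)"
proof (rule poly_mapping_eqI)
  fix x
  show "lk p x = lk (\<Sum>a\<in>kys p. lconst (lk p a) * mon a) x"
    by (auto simp add: lookup_sum lconst_mon lookup_single when_def in_keys_iff)
qed

lemma lookup_Hder: "lk (Hder j f) a = of_int (lk a j) * lk f a"
  by (auto simp add: Hder_def lookup_mapp when_def in_keys_iff)


definition lin :: "(('n, 'k::field) laurent \<Rightarrow> ('n, 'k) laurent) \<Rightarrow> bool" where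
  "lin T \<longleftrightarrow> (\<forall>f g. T (f + g) = T f + T g) \<and> (\<forall>c f. T (lconst c * f) = lconst c * T f)"

lemma lin_0: "lin T \<Longrightarrow> T 0 = 0"
  unfolding lin_def by (metis add_cancel_right_right add_0)

lemma lin_sum: "lin T \<Longrightarrow> T (sum F S) = (\<Sum>x\<in>S. T (F x))"
  by (induction S rule: infinite_finite_induct) (auto simp: lin_0 lin_def)

lemma lin_zero:
  assumes "lin T" "\<And>a. T (mon a) = 0" shows "T p = 0"
proof -
  have "T p = T (\<Sum>a\<in>kys p. lconst (lk p a) * mon a)" by (subst expansion[of p]) simp
  also have "\<dots> = 0" using assms by (simp add: lin_sum lin_def)
  finally show ?thesis .
qed

lemma lin_diff: "lin T \<Longrightarrow> lin S \<Longrightarrow> lin (\<lambda>f. T f - S f)"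
  unfolding lin_def by (simp add: algebra_simps)

lemma lin_eq:
  assumes "lin T" "lin S" "\<And>a. T (mon a) = S (mon a)" shows "T p = S p"
  using lin_zero[OF lin_diff[OF assms(1,2)]] assms(3) by auto

lemma Hder_add: "Hder j (f + g) = Hder j f + Hder j g"
  by (rule poly_mapping_eqI) (simp add: lookup_Hder lookup_add algebra_simps)

lemma Hder_lconst: "Hder j (lconst c * f) = lconst c * Hder j f"
  by (rule poly_mapping_eqI) (simp add: lookup_Hder lookup_lconst_mult lookup_lconst_mult' algebra_simps)

lemma lin_Hder: "lin (Hder j)" by (simp add: lin_def Hder_add Hder_lconst)

lemma Hder_mon: "Hder j (mon a) = lconst (of_int (lk a j)) * mon a"
  by (rule poly_mapping_eqI) (simp add: lookup_Hder lookup_lconst_mult lookup_mon)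

lemma lin_mult_left: "lin (\<lambda>g. f * g)"
  by (simp add: lin_def algebra_simps)
lemma lin_mult_right: "lin (\<lambda>g. g * f)"
  by (simp add: lin_def algebra_simps)
lemma lin_comp: "lin T \<Longrightarrow> lin S \<Longrightarrow> lin (\<lambda>f. T (S f))"
  by (simp add: lin_def)
lemma lin_add: "lin T \<Longrightarrow> lin S \<Longrightarrow> lin (\<lambda>f. T f + S f)"
  unfolding lin_def by (simp add: algebra_simps)

lemma Hder_leibniz: "Hder j (f * g) = f * Hder j g + Hder j f * g"
proof -
  have "\<And>b. Hder j (f * mon b) = f * Hder j (mon b) + Hder j f * mon b"
  proof -
    fix b
    show "Hder j (f * mon b) = f * Hder j (mon b) + Hder j f * mon b"
    proof (rule lin_eq[where T="\<lambda>f. Hder j (f * mon b)"])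
      show "lin (\<lambda>f. Hder j (f * mon b))" by (rule lin_comp[OF lin_Hder lin_mult_right])
      show "lin (\<lambda>f. f * Hder j (mon b) + Hder j f * mon b)"
        by (rule lin_add[OF lin_mult_right lin_comp[OF lin_mult_right lin_Hder]])
      fix a
      have e: "mon a * mon b = mon (a+b)" by (rule mon_mult)
      show "Hder j (mon a * mon b) = mon a * Hder j (mon b) + Hder j (mon a) * mon b"
        by (simp add: e Hder_mon lookup_add lconst_add algebra_simps) (simp add: algebra_simps flip: e)
    qed
  qed
  then show ?thesis
    by (rule lin_eq[where T="\<lambda>g. Hder j (f * g)" and S="\<lambda>g. f * Hder j g + Hder j f * g",
        OF lin_comp[OF lin_Hder lin_mult_left] lin_add[OF lin_comp[OF lin_mult_left lin_Hder] lin_mult_left]])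
qed

lemma der_lin: "is_derivation D \<Longrightarrow> lin D"
  unfolding is_derivation_def lin_def by blast

lemma der_leib: "is_derivation D \<Longrightarrow> D (f * g) = f * D g + D f * g"
  unfolding is_derivation_def by blast

lemma der_1: "is_derivation D \<Longrightarrow> D 1 = 0"
proof -
  assume d: "is_derivation D"
  then have "D (1 * 1) = 1 * D 1 + D 1 * 1" by (rule der_leib)
  then show ?thesis by simp
qed

lemma der_lconst: "is_derivation D \<Longrightarrow> D (lconst c) = 0"
  using der_1[of D] der_lin[of D] unfolding lin_def by (metis mult.right_neutral mult_zero_right)

definition rep :: "('n::finite \<Rightarrow> ('n, 'k::field) laurent) \<Rightarrow> ('n, 'k) laurent \<Rightarrow> ('n, 'k) laurent" where
  "rep g = (\<lambda>f. \<Sum>j\<in>UNIV. g j * Hder j f)"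

lemma rep_der: "is_derivation (rep g)"
  unfolding is_derivation_def rep_def
proof (intro conjI allI)
  fix f h
  show "(\<Sum>j\<in>UNIV. g j * Hder j (f + h)) = (\<Sum>j\<in>UNIV. g j * Hder j f) + (\<Sum>j\<in>UNIV. g j * Hder j h)"
    by (simp add: Hder_add algebra_simps sum.distrib)
  show "(\<Sum>j\<in>UNIV. g j * Hder j (f * h)) = f * (\<Sum>j\<in>UNIV. g j * Hder j h) + (\<Sum>j\<in>UNIV. g j * Hder j f) * h"
    by (simp add: Hder_leibniz algebra_simps sum.distrib sum_distrib_left sum_distrib_right)
next
  fix c f
  show "(\<Sum>j\<in>UNIV. g j * Hder j (lconst c * f)) = lconst c * (\<Sum>j\<in>UNIV. g j * Hder j f)"
    by (simp only: Hder_lconst sum_distrib_left mult.left_commute)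
qed

definition ej :: "'n \<Rightarrow> ('n \<Rightarrow>\<^sub>0 int)" where "ej j = Poly_Mapping.single j 1"

definition hc :: "(('n, 'k::field) laurent \<Rightarrow> ('n, 'k) laurent) \<Rightarrow> 'n \<Rightarrow> ('n, 'k) laurent" where
  "hc D j = mon (- ej j) * D (mon (ej j))"

lemma phi_add:
  assumes d: "is_derivation D"
  shows "mon (-(a+b)) * D (mon (a + b)) = mon (-a) * D (mon a) + mon (-b) * D (mon b)"
proof -
  have "D (mon (a+b)) = mon a * D (mon b) + D (mon a) * mon b"
    using der_leib[OF d] by (simp flip: mon_mult)
  have m: "mon (-(a+b)) = mon (-a) * mon (-b)" by (simp add: mon_mult)
  have "mon (-(a+b)) * D (mon (a + b)) = (mon (-a) * mon (-b)) * (mon a * D (mon b) + D (mon a) * mon b)"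
    by (simp only: m \<open>D (mon (a+b)) = _\<close>)
  also have "\<dots> = (mon (-a) * mon a) * (mon (-b) * D (mon b)) + (mon (-b) * mon b) * (mon (-a) * D (mon a))"
    by (simp add: algebra_simps)
  finally show ?thesis by (simp add: mon_inv)
qed

lemma phi_zero: "is_derivation D \<Longrightarrow> D (mon 0) = 0"
  using der_1 by simp

lemma phi_single:
  assumes d: "is_derivation D"
  shows "mon (- Poly_Mapping.single j k) * D (mon (Poly_Mapping.single j k)) = of_int k * hc D j"
proof -
  define \<psi> where "\<psi> k = mon (- Poly_Mapping.single j k) * D (mon (Poly_Mapping.single j k))" for k
  have h: "hc D j = \<psi> 1" by (simp add: \<psi>_def hc_def ej_def)
  have s: "\<psi> (k + 1) = \<psi> k + hc D j" for k
  proof -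
    have "Poly_Mapping.single j (k+1) = Poly_Mapping.single j k + Poly_Mapping.single j 1"
      by (simp add: single_add)
    then show ?thesis unfolding h \<psi>_def by (simp only: phi_add[OF d])
  qed
  have z: "\<psi> 0 = 0" using phi_zero[OF d] by (simp add: \<psi>_def)
  have "\<psi> k = of_int k * hc D j"
  proof (induction k rule: int_induct[where k=0])
    case base then show ?case using z by simp
  next
    case (step1 i) then show ?case using s[of i] by (simp add: distrib_right)
  next
    case (step2 i) then show ?case using s[of "i - 1"] by (simp add: algebra_simps)
  qed
  then show ?thesis by (simp add: \<psi>_def)
qed

lemma pm_expand: "(a::'n::finite \<Rightarrow>\<^sub>0 int) = (\<Sum>j\<in>UNIV. Poly_Mapping.single j (lk a j))"
  by (rule poly_mapping_eqI) (simp add: lookup_sum lookup_single when_def)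

lemma phi_sum:
  assumes d: "is_derivation D"
  shows "mon (- sum G S) * D (mon (sum G S)) = (\<Sum>x\<in>S. mon (- G x) * D (mon (G x)))"
proof (induction S rule: infinite_finite_induct)
  case (infinite A) then show ?case using phi_zero[OF d] by simp
next
  case empty then show ?case using phi_zero[OF d] by simp
next
  case (insert x A)
  have "sum G (insert x A) = G x + sum G A" using insert by simp
  then have 1: "mon (- sum G (insert x A)) * D (mon (sum G (insert x A))) = mon (- G x) * D (mon (G x)) + mon (- sum G A) * D (mon (sum G A))"
    by (simp only: phi_add[OF d])
  have 2: "(\<Sum>x\<in>insert x A. mon (- G x) * D (mon (G x))) = mon (- G x) * D (mon (G x)) + (\<Sum>x\<in>A. mon (- G x) * D (mon (G x)))"
    using insert(1,2) by (rule sum.insert)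
  show ?case unfolding 1 2 insert.IH ..
qed

lemma der_mon:
  assumes d: "is_derivation D"
  shows "D (mon (a::'n::finite \<Rightarrow>\<^sub>0 int)) = mon a * (\<Sum>j\<in>UNIV. of_int (lk a j) * hc D j)"
proof -
  have e: "sum (\<lambda>j. Poly_Mapping.single j (lk a j)) UNIV = a" by (rule pm_expand[symmetric])
  have "mon (-a) * D (mon a) = (\<Sum>j\<in>UNIV. mon (- Poly_Mapping.single j (lk a j)) * D (mon (Poly_Mapping.single j (lk a j))))"
    using phi_sum[OF d, of "\<lambda>j. Poly_Mapping.single j (lk a j)" UNIV] by (simp only: e)
  also have "\<dots> = (\<Sum>j\<in>UNIV. of_int (lk a j) * hc D j)" by (simp only: phi_single[OF d])
  finally have 1: "mon (-a) * D (mon a) = (\<Sum>j\<in>UNIV. of_int (lk a j) * hc D j)" .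
  have "D (mon a) = (mon a * mon (-a)) * D (mon a)" by (simp add: mon_mult)
  also have "\<dots> = mon a * (mon (-a) * D (mon a))" by (rule mult.assoc)
  finally show ?thesis unfolding 1 .
qed

lemma der_rep:
  assumes d: "is_derivation D"
  shows "D = rep (hc D)"
proof
  fix p
  show "D p = rep (hc D) p"
  proof (rule lin_eq[OF der_lin[OF d] der_lin[OF rep_der]])
    fix a
    show "D (mon a) = rep (hc D) (mon a)"
      by (simp add: der_mon[OF d] rep_def Hder_mon sum_distrib_left algebra_simps lconst_of_int)
  qed
qed




lemma lk_ej: "lk (ej k) j = (if j = k then 1 else 0)"
  by (simp add: ej_def lookup_single when_def)

lemma mon_cancel: "mon (-a) * (p * mon a) = p"
  by (metis mon_inv mult.commute mult.left_commute mult.right_neutral)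

lemma hc_rep: "hc (rep g) k = g k"
proof -
  have "g j * Hder j (mon (ej k)) = (if j = k then g k * mon (ej k) else 0)" for j
    by (cases "j = k") (simp_all add: Hder_mon lk_ej)
  then have "rep g (mon (ej k)) = (\<Sum>j\<in>UNIV. (if j = k then g k * mon (ej k) else 0))"
    unfolding rep_def by presburger
  also have "\<dots> = g k * mon (ej k)" by simp
  finally show ?thesis unfolding hc_def by (simp only: mon_cancel)
qed

lemma Witt_iff: "D \<in> Witt \<longleftrightarrow> is_derivation D" by (simp add: Witt_def)

lemma Witt_eq: fixes D :: "('n::finite, 'k::field) laurent \<Rightarrow> _" assumes "D \<in> Witt" "E \<in> Witt" "hc D = hc E" shows "D = E"
proof -
  have "D = rep (hc D)" using assms(1) der_rep unfolding Witt_iff by blast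
  also have "\<dots> = rep (hc E)" using assms(3) by simp
  also have "\<dots> = E" using assms(2) der_rep[of E] unfolding Witt_iff by simp
  finally show ?thesis .
qed

lemma rep_Witt: "rep g \<in> Witt" by (simp add: Witt_iff rep_der)

lemma hc_mul: "is_derivation D \<Longrightarrow> D (mon (ej k)) = mon (ej k) * hc D k"
  unfolding hc_def by (simp add: mult.assoc[symmetric] mon_mult)

lemma bracket_der:
  assumes D: "is_derivation D" and E: "is_derivation E"
  shows "is_derivation (lie_bracket D E)"
  unfolding is_derivation_def lie_bracket_def
proof (intro conjI allI)
  fix f g
  show "D (E (f + g)) - E (D (f + g)) = D (E f) - E (D f) + (D (E g) - E (D g))"
    using der_lin[OF D] der_lin[OF E] unfolding lin_def by simp
  show "D (E (f * g)) - E (D (f * g)) = f * (D (E g) - E (D g)) + (D (E f) - E (D f)) * g"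
    using der_leib[OF D] der_lin[OF D] der_leib[OF E] der_lin[OF E] unfolding lin_def
    by (simp add: algebra_simps)
next
  fix c f
  show "D (E (lconst c * f)) - E (D (lconst c * f)) = lconst c * (D (E f) - E (D f))"
  proof -
    have dl: "\<And>c f. D (lconst c * f) = lconst c * D f" and el: "\<And>c f. E (lconst c * f) = lconst c * E f"
      using der_lin[OF D] der_lin[OF E] unfolding lin_def by blast+
    show ?thesis by (simp only: dl el right_diff_distrib)
  qed
qed

lemma hc_bracket:
  assumes D: "is_derivation D" and E: "is_derivation E"
  shows "hc (lie_bracket D E) k = D (hc E k) - E (hc D k)"
proof -
  let ?x = "mon (ej k)"
  have "D (E ?x) = ?x * D (hc E k) + ?x * hc D k * hc E k"
    by (simp add: hc_mul[OF E] der_leib[OF D] hc_mul[OF D] algebra_simps)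
  moreover have "E (D ?x) = ?x * E (hc D k) + ?x * hc E k * hc D k"
    by (simp add: hc_mul[OF D] der_leib[OF E] hc_mul[OF E] algebra_simps)
  ultimately have "lie_bracket D E ?x = ?x * (D (hc E k) - E (hc D k))"
    by (simp add: lie_bracket_def algebra_simps)
  then show ?thesis by (simp add: hc_def mon_cancel[where p="_ - _", simplified mult.commute] mult.commute)
qed

definition Z0 :: "('n, 'k::field) laurent \<Rightarrow> ('n, 'k) laurent" where "Z0 = (\<lambda>f. 0)"

lemma hc_add: "hc (der_add D E) k = hc D k + hc E k"
  by (simp add: hc_def der_add_def algebra_simps)
lemma hc_scale: "hc (der_scale c D) k = lconst c * hc D k"
  by (simp add: hc_def der_scale_def algebra_simps)
lemma hc_Z0: "hc Z0 k = 0" by (simp add: hc_def Z0_def)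

lemma add_Witt: assumes "D \<in> Witt" "E \<in> Witt" shows "der_add D E \<in> Witt"
proof -
  have D: "is_derivation D" and E: "is_derivation E" using assms Witt_iff by auto
  have dl: "\<And>c f. D (lconst c * f) = lconst c * D f" and el: "\<And>c f. E (lconst c * f) = lconst c * E f"
      and da: "\<And>f g. D (f + g) = D f + D g" and ea: "\<And>f g. E (f + g) = E f + E g"
      using der_lin[OF D] der_lin[OF E] unfolding lin_def by blast+
  show ?thesis unfolding Witt_iff is_derivation_def der_add_def
  proof (intro conjI allI)
    fix f g show "D (f + g) + E (f + g) = D f + E f + (D g + E g)" by (simp only: da ea algebra_simps)
    show "D (f * g) + E (f * g) = f * (D g + E g) + (D f + E f) * g"
      by (simp only: der_leib[OF D] der_leib[OF E] algebra_simps)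
  next
    fix c f show "D (lconst c * f) + E (lconst c * f) = lconst c * (D f + E f)"
      by (simp only: dl el distrib_left)
  qed
qed

lemma scale_Witt: assumes "D \<in> Witt" shows "der_scale c D \<in> Witt"
proof -
  have D: "is_derivation D" using assms Witt_iff by auto
  have dl: "\<And>c f. D (lconst c * f) = lconst c * D f" 
      and da: "\<And>f g. D (f + g) = D f + D g" 
      using der_lin[OF D] unfolding lin_def by blast+
  show ?thesis unfolding Witt_iff is_derivation_def der_scale_def
  proof (intro conjI allI)
    fix f g show "lconst c * D (f + g) = lconst c * D f + lconst c * D g" by (simp only: da distrib_left)
    show "lconst c * D (f * g) = f * (lconst c * D g) + lconst c * D f * g"
      by (simp only: der_leib[OF D] algebra_simps)
  next
    fix d f show "lconst c * D (lconst d * f) = lconst d * (lconst c * D f)"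
      by (simp only: dl mult.left_commute)
  qed
qed
lemma Z0_Witt: "Z0 \<in> Witt"
  unfolding Witt_iff is_derivation_def Z0_def by simp
lemma bracket_Witt: "D \<in> Witt \<Longrightarrow> E \<in> Witt \<Longrightarrow> lie_bracket D E \<in> Witt"
  by (simp add: Witt_iff bracket_der)

definition delta :: "'n \<Rightarrow> 'n \<Rightarrow> ('n, 'k::field) laurent" where
  "delta i j = (if j = i then 1 else 0)"

lemma Hder_rep: "Hder i = (rep (delta i) :: ('n::finite, 'k::field) laurent \<Rightarrow> _)"
proof
  fix x :: "('n, 'k) laurent"
  have "rep (delta i) x = (\<Sum>j\<in>UNIV. (if j = i then Hder i x else 0))"
    unfolding rep_def delta_def by (rule sum.cong) auto
  then show "Hder i x = rep (delta i) x" by simp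
qed

lemma Hder_Witt: "(Hder i :: ('n::finite, 'k::field) laurent \<Rightarrow> _) \<in> Witt"
  by (simp add: Hder_rep rep_Witt)

lemma hc_Hder: "hc (Hder i :: ('n::finite, 'k::field) laurent \<Rightarrow> _) = delta i"
  by (simp add: Hder_rep hc_rep fun_eq_iff)




definition good_ord :: "(('n \<Rightarrow>\<^sub>0 int) \<Rightarrow> ('n \<Rightarrow>\<^sub>0 int) \<Rightarrow> bool) \<Rightarrow> bool" where
  "good_ord lt \<longleftrightarrow> (\<forall>a. \<not> lt a a) \<and> (\<forall>a b c. lt a b \<longrightarrow> lt b c \<longrightarrow> lt a c) \<and>
     (\<forall>a b. a \<noteq> b \<longrightarrow> lt a b \<or> lt b a) \<and> (\<forall>a b c. lt a b \<longrightarrow> lt (a + c) (b + c))"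

definition lexlt :: "('n::finite \<Rightarrow>\<^sub>0 int) \<Rightarrow> ('n \<Rightarrow>\<^sub>0 int) \<Rightarrow> bool" where
  "lexlt a b \<longleftrightarrow> (\<exists>j. lk a j < lk b j \<and> (\<forall>i. (SOME f :: 'n \<Rightarrow> nat. inj f) i < (SOME f :: 'n \<Rightarrow> nat. inj f) j \<longrightarrow> lk a i = lk b i))"

lemma inj_some: "inj (SOME f :: 'n::finite \<Rightarrow> nat. inj f)"
proof -
  obtain f :: "'n \<Rightarrow> nat" and n where "f ` UNIV = {i. i < n} \<and> inj_on f UNIV"
    using finite_imp_inj_to_nat_seg[of "UNIV :: 'n set"] by auto
  then have "\<exists>f :: 'n \<Rightarrow> nat. inj f" by blast
  then show ?thesis by (rule someI_ex)
qed

lemma good_lex: "good_ord (lexlt :: ('n::finite \<Rightarrow>\<^sub>0 int) \<Rightarrow> _)"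
proof -
  define \<iota> where "\<iota> = (SOME f :: 'n \<Rightarrow> nat. inj f)"
  have inj: "inj \<iota>" unfolding \<iota>_def by (rule inj_some)
  have L: "lexlt a b \<longleftrightarrow> (\<exists>j. lk a j < lk b j \<and> (\<forall>i. \<iota> i < \<iota> j \<longrightarrow> lk a i = lk b i))" for a b :: "'n \<Rightarrow>\<^sub>0 int"
    unfolding lexlt_def \<iota>_def ..
  have irr: "\<not> lexlt a a" for a :: "'n \<Rightarrow>\<^sub>0 int" unfolding L by auto
  have tr: "lexlt a c" if ab: "lexlt a b" and bc: "lexlt b c" for a b c :: "'n \<Rightarrow>\<^sub>0 int"
  proof -
    obtain j1 where j1: "lk a j1 < lk b j1" "\<forall>i. \<iota> i < \<iota> j1 \<longrightarrow> lk a i = lk b i" using ab unfolding L by blast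
    obtain j2 where j2: "lk b j2 < lk c j2" "\<forall>i. \<iota> i < \<iota> j2 \<longrightarrow> lk b i = lk c i" using bc unfolding L by blast
    have "\<iota> j1 < \<iota> j2 \<or> \<iota> j2 < \<iota> j1 \<or> j1 = j2"
    proof (cases "\<iota> j1 = \<iota> j2")
      case True then show ?thesis using injD[OF inj True] by simp
    qed auto
    then consider "\<iota> j1 < \<iota> j2" | "\<iota> j2 < \<iota> j1" | "j1 = j2" by blast
    then show ?thesis
    proof cases
      case 1 then show ?thesis unfolding L using j1 j2 by (intro exI[of _ j1]) auto
    next
      case 2 then show ?thesis unfolding L using j1 j2 by (intro exI[of _ j2]) auto
    next
      case 3 then show ?thesis unfolding L using j1 j2 by (intro exI[of _ j1]) auto
    qed
  qed
  have tot: "lexlt a b \<or> lexlt b a" if "a \<noteq> b" for a b :: "'n \<Rightarrow>\<^sub>0 int"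
  proof -
    define S where "S = {j. lk a j \<noteq> lk b j}"
    have "S \<noteq> {}"
    proof
      assume "S = {}"
      then have "a = b" by (intro poly_mapping_eqI) (auto simp: S_def)
      then show False using that by simp
    qed
    then have "Min (\<iota> ` S) \<in> \<iota> ` S" by simp
    then obtain j where j: "j \<in> S" "\<iota> j = Min (\<iota> ` S)" by auto
    have below: "lk a i = lk b i" if "\<iota> i < \<iota> j" for i
    proof (rule ccontr)
      assume "lk a i \<noteq> lk b i"
      then have "i \<in> S" unfolding S_def by simp
      then have "Min (\<iota> ` S) \<le> \<iota> i" by simp
      then show False using that j by simp
    qed
    show ?thesis
    proof (cases "lk a j < lk b j")
      case True then show ?thesis unfolding L using below by (intro disjI1 exI[of _ j]) auto
    next
      case False then have "lk b j < lk a j" using j unfolding S_def by auto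
      then show ?thesis unfolding L using below by (intro disjI2 exI[of _ j]) auto
    qed
  qed
  have add: "lexlt (a + c) (b + c)" if "lexlt a b" for a b c :: "'n \<Rightarrow>\<^sub>0 int"
    using that unfolding L by (simp add: lookup_add)
  show ?thesis unfolding good_ord_def using irr tr tot add by blast
qed

lemma good_flip: assumes "good_ord lt" shows "good_ord (\<lambda>x y. lt y x)"
proof -
  have a: "\<And>a. \<not> lt a a" "\<And>a b c. lt a b \<Longrightarrow> lt b c \<Longrightarrow> lt a c"
    "\<And>a b. a \<noteq> b \<Longrightarrow> lt a b \<or> lt b a" "\<And>a b c. lt a b \<Longrightarrow> lt (a + c) (b + c)"
    using assms unfolding good_ord_def by blast+
  show ?thesis unfolding good_ord_def
  proof (intro conjI allI impI)
    fix x y z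
    show "\<not> lt x x" by (rule a(1))
    show "lt z x" if "lt y x" "lt z y" using a(2)[OF that(2,1)] .
    show "lt y x \<or> lt x y" if "x \<noteq> y" using a(3)[OF that] by blast
    show "lt (y + z) (x + z)" if "lt y x" using a(4)[OF that] .
  qed
qed

definition lee :: "(('n \<Rightarrow>\<^sub>0 int) \<Rightarrow> ('n \<Rightarrow>\<^sub>0 int) \<Rightarrow> bool) \<Rightarrow> ('n \<Rightarrow>\<^sub>0 int) \<Rightarrow> ('n \<Rightarrow>\<^sub>0 int) \<Rightarrow> bool" where
  "lee lt x y \<longleftrightarrow> x = y \<or> lt x y"

definition bnd :: "(('n \<Rightarrow>\<^sub>0 int) \<Rightarrow> ('n \<Rightarrow>\<^sub>0 int) \<Rightarrow> bool) \<Rightarrow> ('n \<Rightarrow>\<^sub>0 int) \<Rightarrow> ('n, 'k::field) laurent \<Rightarrow> bool" where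
  "bnd lt B p \<longleftrightarrow> (\<forall>x. lk p x \<noteq> 0 \<longrightarrow> lee lt x B)"

definition vdot :: "('n \<Rightarrow> 'k::field) \<Rightarrow> ('n \<Rightarrow>\<^sub>0 int) \<Rightarrow> 'k" where
  "vdot v t = (\<Sum>j\<in>UNIV. v j * of_int (lk t j))"

context
  fixes lt :: "('n \<Rightarrow>\<^sub>0 int) \<Rightarrow> ('n \<Rightarrow>\<^sub>0 int) \<Rightarrow> bool"
  assumes g: "good_ord lt"
begin

lemma lt_irr: "\<not> lt a a" using g unfolding good_ord_def by blast
lemma lt_trans: "lt a b \<Longrightarrow> lt b c \<Longrightarrow> lt a c" using g unfolding good_ord_def by blast
lemma lt_tot: "a \<noteq> b \<Longrightarrow> lt a b \<or> lt b a" using g unfolding good_ord_def by blast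
lemma lt_addR: "lt a b \<Longrightarrow> lt (a + c) (b + c)" using g unfolding good_ord_def by blast
lemma lt_addL: "lt a b \<Longrightarrow> lt (c + a) (c + b)" using lt_addR[of a b c] by (simp add: add.commute)

lemma lt_add2:
  assumes "lee lt x b" "lee lt y c" "lt x b \<or> lt y c" shows "lt (x + y) (b + c)"
proof (cases "lt x b")
  case True
  then have 1: "lt (x + y) (b + y)" by (rule lt_addR)
  show ?thesis
  proof (cases "y = c")
    case True then show ?thesis using 1 by simp
  next
    case False then have "lt y c" using assms(2) unfolding lee_def by simp
    then have "lt (b + y) (b + c)" by (rule lt_addL)
    then show ?thesis using 1 by (rule lt_trans[rotated])
  qed
next
  case False
  then have "x = b" "lt y c" using assms unfolding lee_def by auto
  then show ?thesis using lt_addL by simp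
qed

lemma lee_add: "lee lt x b \<Longrightarrow> lee lt y c \<Longrightarrow> lee lt (x + y) (b + c)"
  using lt_add2[of x b y c] unfolding lee_def by blast

lemma lee_add_eq: "lee lt x b \<Longrightarrow> lee lt y c \<Longrightarrow> x + y = b + c \<Longrightarrow> x = b \<and> y = c"
  using lt_add2[of x b y c] lt_irr[of "b + c"] unfolding lee_def by auto

lemma bnd_mult:
  assumes p: "bnd lt B p" and q: "bnd lt C q"
  shows "bnd lt (B + C) (p * q)" "lk (p * q) (B + C) = lk p B * lk q C"
proof -
  show "bnd lt (B + C) (p * q)" unfolding bnd_def
  proof (intro allI impI)
    fix x assume "lk (p * q) x \<noteq> 0"
    then have "x \<in> kys (p * q)" by (simp add: in_keys_iff)
    then obtain a b where "x = a + b" "a \<in> kys p" "b \<in> kys q" using keys_mult by blast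
    then show "lee lt x (B + C)" using p q lee_add unfolding bnd_def by (simp add: in_keys_iff)
  qed
  have inner: "(\<Sum>r. lk q r when B + C = l + r) = lk q (- l + (B + C))" for l
  proof -
    have "(\<lambda>r. lk q r when B + C = l + r) = (\<lambda>r. lk q r when r = - l + (B + C))"
      by (auto simp: fun_eq_iff when_def algebra_simps)
    then have "(\<Sum>r. lk q r when B + C = l + r) = (\<Sum>r. lk q r when r = - l + (B + C))" by (simp only:)
    also have "\<dots> = lk q (- l + (B + C))" by (rule Sum_any_when_equal)
    finally show ?thesis .
  qed
  have "lk (p * q) (B + C) = (\<Sum>l. lk p l * lk q (- l + (B + C)))"
    by (simp add: lookup_mult inner)
  also have "\<dots> = (\<Sum>l. if l = B then lk p l * lk q (- l + (B + C)) else 0)"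
  proof (rule arg_cong[where f=Sum_any])
    show "(\<lambda>l. lk p l * lk q (- l + (B + C))) = (\<lambda>l. if l = B then lk p l * lk q (- l + (B + C)) else 0)"
    proof
      fix l
      show "lk p l * lk q (- l + (B + C)) = (if l = B then lk p l * lk q (- l + (B + C)) else 0)"
      proof (cases "lk p l \<noteq> 0 \<and> lk q (- l + (B + C)) \<noteq> 0")
        case True
        then have "lee lt l B" "lee lt (- l + (B + C)) C" using p q unfolding bnd_def by auto
        moreover have "l + (- l + (B + C)) = B + C" by simp
        ultimately have "l = B" using lee_add_eq by blast
        then show ?thesis by simp
      qed auto
    qed
  qed
  also have "\<dots> = lk p B * lk q C" by simp
  finally show "lk (p * q) (B + C) = lk p B * lk q C" .
qed

lemma bnd_0: "bnd lt B 0" by (simp add: bnd_def)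
lemma bnd_add: assumes "bnd lt B p" "bnd lt B q" shows "bnd lt B (p + q)"
  unfolding bnd_def lookup_add
proof (intro allI impI)
  fix x assume "lk p x + lk q x \<noteq> 0"
  then show "lee lt x B" using assms unfolding bnd_def by (cases "lk p x = 0") auto
qed
lemma bnd_diff: assumes "bnd lt B p" "bnd lt B q" shows "bnd lt B (p - q)"
  unfolding bnd_def lookup_minus
proof (intro allI impI)
  fix x assume "lk p x - lk q x \<noteq> 0"
  then show "lee lt x B" using assms unfolding bnd_def by (cases "lk p x = 0") auto
qed
lemma bnd_sum: "(\<And>x. x \<in> S \<Longrightarrow> bnd lt B (F x)) \<Longrightarrow> bnd lt B (sum F S)"
  by (induction S rule: infinite_finite_induct) (auto simp: bnd_0 bnd_add)
lemma bnd_Hder: "bnd lt B p \<Longrightarrow> bnd lt B (Hder j p)"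
  by (auto simp: bnd_def lookup_Hder)
lemma bnd_lconst: "bnd lt B p \<Longrightarrow> bnd lt B (lconst c * p)"
  by (auto simp: bnd_def lookup_lconst_mult)
lemma bnd_mono: "bnd lt B p \<Longrightarrow> lee lt B C \<Longrightarrow> bnd lt C p"
  unfolding bnd_def lee_def using lt_trans by blast


end




lemma vdot_add: "vdot v (x + y) = vdot v x + vdot v y"
  by (simp add: vdot_def lookup_add algebra_simps sum.distrib)

lemma vdot_scale: "vdot (\<lambda>j. a * v j) x = a * vdot v x"
  by (simp add: vdot_def sum_distrib_left algebra_simps)

lemma vdot_ej: "vdot (v :: 'n::finite \<Rightarrow> 'k::field) (ej l) = v l"
proof -
  have "vdot v (ej l) = (\<Sum>j\<in>UNIV. if j = l then v l else 0)"
    unfolding vdot_def by (rule sum.cong) (auto simp: lk_ej)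
  then show ?thesis by simp
qed

context
  fixes lt :: "('n::finite \<Rightarrow>\<^sub>0 int) \<Rightarrow> ('n \<Rightarrow>\<^sub>0 int) \<Rightarrow> bool"
  assumes g: "good_ord lt"
begin

lemma lead_bracket:
  fixes gg u :: "'n \<Rightarrow> ('n, 'k::field) laurent"
  assumes bg: "\<And>j. bnd lt b (gg j)" and bu: "\<And>j. bnd lt t (u j)"
  shows "bnd lt (b + t) (hc (lie_bracket (rep gg) (rep u)) k)"
    "lk (hc (lie_bracket (rep gg) (rep u)) k) (b + t) =
       vdot (\<lambda>j. lk (gg j) b) t * lk (u k) t - vdot (\<lambda>j. lk (u j) t) b * lk (gg k) b"
proof -
  have h: "hc (lie_bracket (rep gg) (rep u)) k = (\<Sum>j\<in>UNIV. gg j * Hder j (u k)) - (\<Sum>j\<in>UNIV. u j * Hder j (gg k))"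
    unfolding hc_bracket[OF rep_der rep_der] hc_rep by (simp add: rep_def)
  have b1: "bnd lt (b + t) (gg j * Hder j (u k))" for j
    using bnd_mult[OF g bg bnd_Hder[OF g bu]] by blast
  have l1: "lk (gg j * Hder j (u k)) (b + t) = lk (gg j) b * (of_int (lk t j) * lk (u k) t)" for j
    using bnd_mult[OF g bg bnd_Hder[OF g bu]] by (simp add: lookup_Hder)
  have b2: "bnd lt (b + t) (u j * Hder j (gg k))" for j
    using bnd_mult[OF g bu bnd_Hder[OF g bg]] by (simp add: add.commute)
  have l2: "lk (u j * Hder j (gg k)) (b + t) = lk (u j) t * (of_int (lk b j) * lk (gg k) b)" for j
    using bnd_mult(2)[OF g bu bnd_Hder[OF g bg]] by (simp add: lookup_Hder add.commute)
  show "bnd lt (b + t) (hc (lie_bracket (rep gg) (rep u)) k)"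
    unfolding h by (intro bnd_diff[OF g] bnd_sum[OF g] b1 b2)
  show "lk (hc (lie_bracket (rep gg) (rep u)) k) (b + t) =
       vdot (\<lambda>j. lk (gg j) b) t * lk (u k) t - vdot (\<lambda>j. lk (u j) t) b * lk (gg k) b"
    unfolding h by (simp add: lookup_minus lookup_sum l1 l2 vdot_def sum_distrib_right sum_distrib_left algebra_simps)
qed

end

inductive_set sp :: "(('n, 'k::field) laurent \<Rightarrow> ('n, 'k) laurent) set \<Rightarrow> (('n, 'k) laurent \<Rightarrow> ('n, 'k) laurent) set"
  for Z where
  sp_Z0: "Z0 \<in> sp Z"
| sp_base: "X \<in> Z \<Longrightarrow> X \<in> sp Z"
| sp_add: "X \<in> sp Z \<Longrightarrow> Y \<in> sp Z \<Longrightarrow> der_add X Y \<in> sp Z"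
| sp_scale: "X \<in> sp Z \<Longrightarrow> der_scale c X \<in> sp Z"

definition LF :: "(('n, 'k::field) laurent \<Rightarrow> ('n, 'k) laurent) \<Rightarrow> bool" where
  "LF D \<longleftrightarrow> (\<forall>Y\<in>Witt. \<exists>Z. finite Z \<and> Z \<subseteq> Witt \<and> (\<forall>k. (lie_bracket D ^^ k) Y \<in> sp Z))"

definition FZ :: "(('n, 'k::field) laurent \<Rightarrow> ('n, 'k) laurent) set \<Rightarrow> ('n \<Rightarrow>\<^sub>0 int) set" where
  "FZ Z = (\<Union>z\<in>Z. \<Union>j. kys (hc z j))"

lemma sp_keys: "X \<in> sp Z \<Longrightarrow> lk (hc X j) x \<noteq> 0 \<Longrightarrow> x \<in> FZ Z"
proof (induction X rule: sp.induct)
  case sp_Z0 then show ?case by (simp add: hc_Z0)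
next
  case (sp_base X) then show ?case by (auto simp: FZ_def in_keys_iff)
next
  case (sp_add X Y) then show ?case by (cases "lk (hc X j) x = 0") (auto simp: hc_add lookup_add)
next
  case (sp_scale X c) then show ?case by (auto simp: hc_scale lookup_lconst_mult)
qed

lemma FZ_finite: "finite Z \<Longrightarrow> finite (FZ (Z :: (('n::finite, 'k::field) laurent \<Rightarrow> _) set))"
  unfolding FZ_def by auto




context
  fixes lt :: "('n::finite \<Rightarrow>\<^sub>0 int) \<Rightarrow> ('n \<Rightarrow>\<^sub>0 int) \<Rightarrow> bool"
  assumes g: "good_ord lt"
begin

lemma iter_lead:
  fixes gg :: "'n \<Rightarrow> ('n, 'k::field) laurent"
  assumes bg: "\<And>j. bnd lt b (gg j)"
  shows "(lie_bracket (rep gg) ^^ k) (rep (\<lambda>j. lconst (lk (gg j) b) * mon c)) \<in> Witt \<and>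
    (\<forall>j. bnd lt (((+) b ^^ k) c) (hc ((lie_bracket (rep gg) ^^ k) (rep (\<lambda>j. lconst (lk (gg j) b) * mon c))) j)) \<and>
    (\<forall>j. lk (hc ((lie_bracket (rep gg) ^^ k) (rep (\<lambda>j. lconst (lk (gg j) b) * mon c))) j) (((+) b ^^ k) c)
       = (\<Prod>i<k. vdot (\<lambda>j. lk (gg j) b) (((+) b ^^ i) c) - vdot (\<lambda>j. lk (gg j) b) b) * lk (gg j) b)"
proof (induction k)
  case 0
  have "bnd lt c (lconst (lk (gg j) b) * mon c)" for j
    by (simp add: bnd_def lookup_lconst_mult lookup_mon lee_def)
  moreover have "lk (lconst (lk (gg j) b) * mon c) c = lk (gg j) b" for j
    by (simp add: lookup_lconst_mult lookup_mon)
  ultimately show ?case by (simp add: rep_Witt hc_rep)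
next
  case (Suc k)
  define v where "v = (\<lambda>j. lk (gg j) b)"
  define Y where "Y = (lie_bracket (rep gg) ^^ k) (rep (\<lambda>j. lconst (lk (gg j) b) * mon c))"
  define t where "t = ((+) b ^^ k) c"
  define \<alpha> where "\<alpha> = (\<Prod>i<k. vdot v (((+) b ^^ i) c) - vdot v b)"
  have IH: "Y \<in> Witt" "\<And>j. bnd lt t (hc Y j)" "\<And>j. lk (hc Y j) t = \<alpha> * v j"
    using Suc.IH unfolding Y_def t_def \<alpha>_def v_def by blast+
  have YY: "Y = rep (hc Y)" using IH(1) der_rep Witt_iff by blast
  have e: "(lie_bracket (rep gg) ^^ Suc k) (rep (\<lambda>j. lconst (lk (gg j) b) * mon c)) = lie_bracket (rep gg) (rep (hc Y))"
    by (simp add: Y_def[symmetric] flip: YY)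
  have t: "((+) b ^^ Suc k) c = b + t" by (simp add: t_def)
  have a: "(\<Prod>i<Suc k. vdot v (((+) b ^^ i) c) - vdot v b) = \<alpha> * (vdot v t - vdot v b)"
    by (simp add: \<alpha>_def t_def)
  have W: "lie_bracket (rep gg) (rep (hc Y)) \<in> Witt" by (intro bracket_Witt rep_Witt)
  have B: "bnd lt (b + t) (hc (lie_bracket (rep gg) (rep (hc Y))) j)" for j
    using lead_bracket(1)[OF g, where gg=gg and u="hc Y" and b=b and t=t and k=j] bg IH(2) by blast
  have L: "lk (hc (lie_bracket (rep gg) (rep (hc Y))) j) (b + t) = \<alpha> * (vdot v t - vdot v b) * v j" for j
  proof -
    have "lk (hc (lie_bracket (rep gg) (rep (hc Y))) j) (b + t) =
       vdot v t * lk (hc Y j) t - vdot (\<lambda>j. lk (hc Y j) t) b * v j"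
      using lead_bracket(2)[OF g, where gg=gg and u="hc Y" and b=b and t=t and k=j] bg IH(2) unfolding v_def by blast
    also have "\<dots> = vdot v t * (\<alpha> * v j) - (\<alpha> * vdot v b) * v j"
      by (simp add: IH(3) vdot_scale)
    finally show ?thesis by (simp add: algebra_simps)
  qed
  show ?case unfolding e t using W B L a unfolding v_def by auto
qed

lemma core_c:
  fixes D :: "('n, 'k::field) laurent \<Rightarrow> ('n, 'k) laurent"
  assumes DW: "D \<in> Witt" and lf: "LF D" and b0: "lt 0 b" and bD: "\<And>j. bnd lt b (hc D j)"
    and j0: "lk (hc D j0) b \<noteq> 0"
    and cc: "\<And>k. vdot (\<lambda>j. lk (hc D j) b) (((+) b ^^ k) c) - vdot (\<lambda>j. lk (hc D j) b) b \<noteq> 0"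
  shows False
proof -
  define gg where "gg = hc D"
  have Dr: "D = rep gg" using DW der_rep Witt_iff unfolding gg_def by blast
  define Y0 where "Y0 = rep (\<lambda>j. lconst (lk (gg j) b) * mon c)"
  define t where "t k = ((+) b ^^ k) c" for k
  obtain Z where Z: "finite Z" "Z \<subseteq> Witt" "\<And>k. (lie_bracket D ^^ k) Y0 \<in> sp Z"
    using lf rep_Witt unfolding LF_def Y0_def by blast
  have "t k \<in> FZ Z" for k
  proof -
    have it: "\<forall>j. lk (hc ((lie_bracket (rep gg) ^^ k) Y0) j) (t k)
       = (\<Prod>i<k. vdot (\<lambda>j. lk (gg j) b) (((+) b ^^ i) c) - vdot (\<lambda>j. lk (gg j) b) b) * lk (gg j) b"
      using iter_lead[where gg=gg and b=b and k=k and c=c] bD unfolding gg_def Y0_def t_def by blast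
    have "(\<Prod>i<k. vdot (\<lambda>j. lk (gg j) b) (((+) b ^^ i) c) - vdot (\<lambda>j. lk (gg j) b) b) \<noteq> 0"
      using cc unfolding gg_def by (simp add: prod_zero_iff)
    then have "lk (hc ((lie_bracket (rep gg) ^^ k) Y0) j0) (t k) \<noteq> 0"
      using it j0 unfolding gg_def by simp
    then show ?thesis using sp_keys[OF Z(3)[of k]] Dr by simp
  qed
  then have sub: "range t \<subseteq> FZ Z" by blast
  have step: "lt (t k) (t (Suc k))" for k
    using lt_addR[OF g b0, of "t k"] by (simp add: t_def)
  have mono: "lt (t k) (t (Suc (k + d)))" for k d
  proof (induction d)
    case 0 then show ?case using step by simp
  next
    case (Suc d) then show ?case using step[of "Suc (k + d)"] lt_trans[OF g] by simp
  qed
  have "inj t"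
  proof (rule injI)
    fix x y assume "t x = t y"
    show "x = y"
    proof (rule ccontr)
      assume "x \<noteq> y"
      then consider "x < y" | "y < x" by linarith
      then show False
      proof cases
        case 1 then obtain d where "y = Suc (x + d)" using less_imp_Suc_add by blast
        then show False using mono[of x d] \<open>t x = t y\<close> lt_irr[OF g] by simp
      next
        case 2 then obtain d where "x = Suc (y + d)" using less_imp_Suc_add by blast
        then show False using mono[of y d] \<open>t x = t y\<close> lt_irr[OF g] by simp
      qed
    qed
  qed
  then have "infinite (range t)" using finite_imageD infinite_UNIV_nat by blast
  then show False using sub FZ_finite[OF Z(1)] finite_subset by blast
qed

end

lemma vdot_iter: "vdot v (((+) b ^^ k) c) = vdot v c + of_nat k * vdot v b"
  by (induction k) (simp_all add: vdot_add algebra_simps)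

lemma core:
  fixes D :: "('n::finite, 'k::field_char_0) laurent \<Rightarrow> ('n, 'k) laurent"
  assumes g: "good_ord lt" and DW: "D \<in> Witt" and lf: "LF D" and b0: "lt 0 b" and bD: "\<And>j. bnd lt b (hc D j)"
    and j0: "lk (hc D j0) b \<noteq> 0"
  shows False
proof -
  define v where "v j = lk (hc D j) b" for j
  show False
  proof (cases "vdot v b = 0")
    case True
    have "vdot v (((+) b ^^ k) (ej j0)) - vdot v b \<noteq> 0" for k
      using True j0 by (simp add: vdot_iter vdot_ej v_def)
    then show False using core_c[OF g DW lf b0 bD j0] unfolding v_def by blast
  next
    case False
    have "vdot v (((+) b ^^ k) (b + b)) - vdot v b \<noteq> 0" for k
    proof -
      have "vdot v (((+) b ^^ k) (b + b)) - vdot v b = (of_nat k + 1) * vdot v b"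
        by (simp add: vdot_iter vdot_add algebra_simps)
      moreover have "(of_nat k + 1 :: 'k) \<noteq> 0"
        by (metis of_nat_Suc of_nat_eq_0_iff nat.distinct(1) add.commute)
      ultimately show ?thesis using False by simp
    qed
    then show False using core_c[OF g DW lf b0 bD j0] unfolding v_def by blast
  qed
qed




lemma Hder_lconst0: "Hder j (lconst c) = 0"
  by (rule poly_mapping_eqI) (simp add: lookup_Hder lookup_lconst)

lemma rep_lconst_zero: "rep g (lconst c) = 0"
proof -
  show ?thesis by (simp add: rep_def Hder_lconst0)
qed

lemma der_delta: "D \<in> Witt \<Longrightarrow> D (delta i j) = 0"
  using der_lconst[of D 1] der_lconst[of D 0] by (simp add: Witt_iff delta_def)

lemma hc_bracket_H:
  fixes X :: "('n::finite, 'k::field) laurent \<Rightarrow> _"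
  assumes "X \<in> Witt" shows "hc (lie_bracket (Hder i) X) j = Hder i (hc X j)"
  using hc_bracket[OF rep_der[of "delta i"], of X j] assms der_delta[OF assms]
  by (simp add: Witt_iff hc_Hder flip: Hder_rep)

lemma lookup_Hder_pow: "lk ((Hder i ^^ k) p) x = (of_int (lk x i)) ^ k * lk p x"
  by (induction k) (simp_all add: lookup_Hder)

lemma sp_Witt: "X \<in> sp Z \<Longrightarrow> Z \<subseteq> Witt \<Longrightarrow> X \<in> Witt"
  by (induction X rule: sp.induct) (auto intro: Z0_Witt add_Witt scale_Witt)

lemma comb:
  assumes "finite A" "\<And>a. a \<in> A \<Longrightarrow> X a \<in> sp Z"
  shows "\<exists>W\<in>sp Z. \<forall>j. hc W j = (\<Sum>a\<in>A. lconst (c a) * hc (X a) j)"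
  using assms
proof (induction A rule: finite_induct)
  case empty show ?case by (intro bexI[of _ Z0] sp.sp_Z0) (simp add: hc_Z0)
next
  case (insert a A)
  then obtain W where W: "W \<in> sp Z" "\<forall>j. hc W j = (\<Sum>a\<in>A. lconst (c a) * hc (X a) j)" by auto
  have "der_add (der_scale (c a) (X a)) W \<in> sp Z" using W insert by (intro sp_add sp_scale) auto
  then show ?case using W insert by (intro bexI[of _ "der_add (der_scale (c a) (X a)) W"]) (auto simp: hc_add hc_scale)
qed

lemma LF_Hder: "LF (Hder i :: ('n::finite, 'k::field) laurent \<Rightarrow> _)"
  unfolding LF_def
proof
  fix Y :: "('n, 'k) laurent \<Rightarrow> _" assume Y: "Y \<in> Witt"
  define A where "A = (\<Union>j. kys (hc Y j))"
  have fA: "finite A" unfolding A_def by auto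
  define P where "P a = rep (\<lambda>j. lconst (lk (hc Y j) a) * mon a)" for a
  define Z where "Z = P ` A"
  have ZW: "Z \<subseteq> Witt" unfolding Z_def P_def using rep_Witt by blast
  have it: "(lie_bracket (Hder i) ^^ k) Y \<in> Witt \<and> (\<forall>j. hc ((lie_bracket (Hder i) ^^ k) Y) j = (Hder i ^^ k) (hc Y j))" for k
  proof (induction k)
    case 0 then show ?case using Y by simp
  next
    case (Suc k) then show ?case by (simp add: hc_bracket_H bracket_Witt Hder_Witt)
  qed
  have "(lie_bracket (Hder i) ^^ k) Y \<in> sp Z" for k
  proof -
    obtain W where W: "W \<in> sp Z" "\<forall>j. hc W j = (\<Sum>a\<in>A. lconst ((of_int (lk a i)) ^ k) * hc (P a) j)"
      using comb[OF fA, of P Z "\<lambda>a. (of_int (lk a i)) ^ k"] sp_base unfolding Z_def by blast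
    have "hc W j = hc ((lie_bracket (Hder i) ^^ k) Y) j" for j
    proof (rule poly_mapping_eqI)
      fix x
      have "lk (hc W j) x = (\<Sum>a\<in>A. (of_int (lk a i)) ^ k * (if x = a then lk (hc Y j) a else 0))"
        using W(2) unfolding P_def hc_rep by (simp add: lookup_sum lookup_lconst_mult lookup_mon) (rule sum.cong, auto)
      also have "\<dots> = (if x \<in> A then (of_int (lk x i)) ^ k * lk (hc Y j) x else 0)"
        using fA by (simp add: if_distrib[of "\<lambda>y. _ * y"] sum.delta' cong: if_cong)
      also have "\<dots> = lk (hc ((lie_bracket (Hder i) ^^ k) Y) j) x"
        using it[of k] by (auto simp: lookup_Hder_pow A_def in_keys_iff)
      finally show "lk (hc W j) x = lk (hc ((lie_bracket (Hder i) ^^ k) Y) j) x" .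
    qed
    then have "W = (lie_bracket (Hder i) ^^ k) Y"
      using Witt_eq[OF sp_Witt[OF W(1) ZW]] it by blast
    then show ?thesis using W(1) by simp
  qed
  then show "\<exists>Z. finite Z \<and> Z \<subseteq> Witt \<and> (\<forall>k. (lie_bracket (Hder i) ^^ k) Y \<in> sp Z)"
    using fA ZW unfolding Z_def by blast
qed




lemma int_left_inv:
  fixes A C :: "int ^ 'n ^ 'n"
  assumes "C ** A = mat 1" shows "A ** C = mat 1"
proof -
  define R :: "int ^ 'n ^ 'n \<Rightarrow> real ^ 'n ^ 'n" where "R M = (\<chi> i j. of_int (M $ i $ j))" for M
  have Rm: "R (X ** Y) = R X ** R Y" for X Y
    by (simp add: R_def matrix_matrix_mult_def vec_eq_iff of_int_sum)
  have R1: "R (mat 1) = mat 1" by (simp add: R_def mat_def vec_eq_iff)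
  have "R C ** R A = mat 1" using assms by (simp flip: Rm R1)
  then have "R A ** R C = mat 1" using matrix_left_right_inverse by blast
  then have "R (A ** C) = R (mat 1)" by (simp add: Rm R1)
  then show ?thesis by (simp add: R_def vec_eq_iff)
qed

lemma ex_max:
  assumes g: "good_ord lt" and "finite S" "S \<noteq> {}"
  shows "\<exists>m\<in>S. \<forall>x\<in>S. lee lt x m"
  using assms(2,3)
proof (induction S rule: finite_ne_induct)
  case (singleton x) then show ?case by (simp add: lee_def)
next
  case (insert x F)
  then obtain m where m: "m \<in> F" "\<forall>y\<in>F. lee lt y m" by blast
  show ?case
  proof (cases "lt m x")
    case True
    have "\<forall>y\<in>insert x F. lee lt y x"
    proof
      fix y assume "y \<in> insert x F"
      then consider "y = x" | "y = m" | "lt y m" using m unfolding lee_def by blast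
      then show "lee lt y x" using True lt_trans[OF g, of y m x] unfolding lee_def by cases auto
    qed
    then show ?thesis by blast
  next
    case False
    then have "lee lt x m" using lt_tot[OF g, of x m] unfolding lee_def by blast
    then show ?thesis using m by blast
  qed
qed

lemma const_of_LF:
  fixes D :: "('n::finite, 'k::field_char_0) laurent \<Rightarrow> ('n, 'k) laurent"
  assumes DW: "D \<in> Witt" and lf: "LF D"
  shows "lk (hc D j) x \<noteq> 0 \<Longrightarrow> x = 0"
proof (rule ccontr)
  assume x0: "lk (hc D j) x \<noteq> 0" and nz: "x \<noteq> 0"
  define S where "S = (\<Union>j. kys (hc D j))"
  have fS: "finite S" unfolding S_def by auto
  have xS: "x \<in> S" using x0 unfolding S_def by (auto simp: in_keys_iff)
  then have neS: "S \<noteq> {}" by blast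
  have gl: "good_ord (lexlt :: ('n \<Rightarrow>\<^sub>0 int) \<Rightarrow> _)" by (rule good_lex)
  obtain m where m: "m \<in> S" "\<forall>y\<in>S. lee lexlt y m" using ex_max[OF gl fS neS] by blast
  have bm: "bnd lexlt m (hc D j)" for j using m unfolding bnd_def S_def by (auto simp: in_keys_iff)
  obtain jm where jm: "lk (hc D jm) m \<noteq> 0" using m(1) unfolding S_def by (auto simp: in_keys_iff)
  show False
  proof (cases "lexlt 0 m")
    case True
    show False by (rule core[OF gl DW lf True bm jm])
  next
    case False
    have "lexlt x 0"
    proof (cases "m = 0")
      case True then show ?thesis using m(2) xS nz unfolding lee_def by auto
    next
      case mF: False
      then have "lexlt m 0" using False lt_tot[OF gl, of m 0] by blast
      moreover have "x = m \<or> lexlt x m" using m(2) xS unfolding lee_def by blast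
      ultimately show ?thesis using lt_trans[OF gl, of x m 0] by auto
    qed
    have gf: "good_ord (\<lambda>a b :: 'n \<Rightarrow>\<^sub>0 int. lexlt b a)" by (rule good_flip[OF gl])
    obtain m' where m': "m' \<in> S" "\<forall>y\<in>S. lee (\<lambda>a b. lexlt b a) y m'" using ex_max[OF gf fS neS] by blast
    have "x = m' \<or> lexlt m' x" using m'(2) xS unfolding lee_def by blast
    then have "lexlt m' 0" using \<open>lexlt x 0\<close> lt_trans[OF gl, of m' x 0] by auto
    moreover have "bnd (\<lambda>a b. lexlt b a) m' (hc D j)" for j using m' unfolding bnd_def S_def by (auto simp: in_keys_iff)
    moreover obtain jm' where "lk (hc D jm') m' \<noteq> 0" using m'(1) unfolding S_def by (auto simp: in_keys_iff)
    ultimately show False using core[OF gf DW lf, of m'] by blast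
  qed
qed

lemma hc_const:
  assumes "\<And>x. lk p x \<noteq> 0 \<Longrightarrow> x = 0" shows "p = lconst (lk p 0)"
  by (rule poly_mapping_eqI) (use assms in \<open>auto simp: lookup_lconst\<close>)

lemma Witt_const:
  fixes D :: "('n::finite, 'k::field) laurent \<Rightarrow> ('n, 'k) laurent"
  assumes "D \<in> Witt" "\<And>j x. lk (hc D j) x \<noteq> 0 \<Longrightarrow> x = 0"
  shows "D = rep (\<lambda>j. lconst (lk (hc D j) 0))"
proof -
  have "hc D = (\<lambda>j. lconst (lk (hc D j) 0))" using hc_const assms(2) by blast
  then show ?thesis using der_rep[of D] assms(1) Witt_iff by metis
qed

definition EV :: "(('n, 'k::field) laurent \<Rightarrow> ('n, 'k) laurent) \<Rightarrow> bool" where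
  "EV D \<longleftrightarrow> (\<forall>Y\<in>Witt. \<forall>ev. Y \<noteq> Z0 \<longrightarrow> lie_bracket D Y = der_scale ev Y \<longrightarrow> (\<exists>m::int. ev = of_int m))"

lemma nonzero_hc:
  fixes Y :: "('n::finite, 'k::field) laurent \<Rightarrow> ('n, 'k) laurent"
  assumes "Y \<in> Witt" "Y \<noteq> Z0" shows "\<exists>j x. lk (hc Y j) x \<noteq> 0"
proof (rule ccontr)
  assume "\<not> ?thesis"
  then have "hc Y = hc Z0" by (auto simp: hc_Z0 fun_eq_iff intro!: poly_mapping_eqI)
  then show False using Witt_eq[OF assms(1) Z0_Witt] assms(2) by blast
qed

lemma EV_Hder: "EV (Hder i :: ('n::finite, 'k::field) laurent \<Rightarrow> _)"
  unfolding EV_def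
proof (intro ballI allI impI)
  fix Y :: "('n, 'k) laurent \<Rightarrow> _" and ev
  assume Y: "Y \<in> Witt" "Y \<noteq> Z0" and e: "lie_bracket (Hder i) Y = der_scale ev Y"
  obtain j x where x: "lk (hc Y j) x \<noteq> 0" using nonzero_hc[OF Y] by blast
  have "hc (lie_bracket (Hder i) Y) j = hc (der_scale ev Y) j" using e by simp
  then have "lk (Hder i (hc Y j)) x = lk (lconst ev * hc Y j) x" by (simp add: hc_bracket_H[OF Y(1)] hc_scale)
  then have "of_int (lk x i) * lk (hc Y j) x = ev * lk (hc Y j) x" by (simp add: lookup_Hder lookup_lconst_mult)
  then show "\<exists>m::int. ev = of_int m" using x by (intro exI[of _ "lk x i"]) simp
qed

lemma rep_zero_arg: "rep g 0 = 0"
  by (simp add: rep_def lin_0[OF lin_Hder])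

lemma EV_const:
  fixes d :: "'n::finite \<Rightarrow> 'k::field"
  assumes "EV (rep (\<lambda>j. lconst (d j)))" shows "\<exists>m::int. d j = of_int m"
proof -
  define Y where "Y = rep (\<lambda>k. if k = j then mon (ej j) else (0 :: ('n, 'k) laurent))"
  have YW: "Y \<in> Witt" unfolding Y_def by (rule rep_Witt)
  have hY: "hc Y k = (if k = j then mon (ej j) else 0)" for k unfolding Y_def hc_rep ..
  have Ynz: "Y \<noteq> Z0"
  proof
    assume "Y = Z0"
    then have "lk (hc Y j) (ej j) = 0" by (simp add: hc_Z0)
    then show False by (simp add: hY lookup_mon)
  qed
  have rm: "rep (\<lambda>j. lconst (d j)) (mon (ej j)) = lconst (d j) * mon (ej j)"
  proof -
    have "rep (\<lambda>j. lconst (d j)) (mon (ej j)) = (\<Sum>l\<in>UNIV. if l = j then lconst (d j) * mon (ej j) else 0)"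
      unfolding rep_def by (rule sum.cong) (auto simp: Hder_mon lk_ej)
    then show ?thesis by simp
  qed
  have "lie_bracket (rep (\<lambda>j. lconst (d j))) Y = der_scale (d j) Y"
  proof (rule Witt_eq[OF bracket_Witt[OF rep_Witt YW] scale_Witt[OF YW]])
    show "hc (lie_bracket (rep (\<lambda>j. lconst (d j))) Y) = hc (der_scale (d j) Y)"
    proof
      fix k
      have "hc (lie_bracket (rep (\<lambda>j. lconst (d j))) Y) k = rep (\<lambda>j. lconst (d j)) (hc Y k) - Y (lconst (d k))"
        using hc_bracket[OF rep_der YW[unfolded Witt_iff]] by (simp add: hc_rep)
      also have "\<dots> = lconst (d j) * hc Y k"
      proof -
        have "Y (lconst (d k)) = 0" unfolding Y_def by (rule rep_lconst_zero)
        then show ?thesis by (cases "k = j") (simp_all add: hY rm rep_zero_arg)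
      qed
      finally show "hc (lie_bracket (rep (\<lambda>j. lconst (d j))) Y) k = hc (der_scale (d j) Y) k"
        by (simp add: hc_scale)
    qed
  qed
  then show ?thesis using assms YW Ynz unfolding EV_def by blast
qed




context
  fixes \<sigma> :: "((('n::finite, 'k::field_char_0) laurent \<Rightarrow> ('n, 'k) laurent)
               \<Rightarrow> (('n, 'k) laurent \<Rightarrow> ('n, 'k) laurent))"
  assumes aut: "witt_lie_aut \<sigma>"
begin

lemma s_bij: "bij_betw \<sigma> Witt Witt" using aut unfolding witt_lie_aut_def by (rule conjunct1)
lemma s_W: "X \<in> Witt \<Longrightarrow> \<sigma> X \<in> Witt" by (rule bij_betw_apply[OF s_bij])
lemma s_inj: "X \<in> Witt \<Longrightarrow> Y \<in> Witt \<Longrightarrow> \<sigma> X = \<sigma> Y \<Longrightarrow> X = Y"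
  using bij_betw_imp_inj_on[OF s_bij] by (rule inj_onD)
lemma s_surj: "Y \<in> Witt \<Longrightarrow> \<exists>X\<in>Witt. \<sigma> X = Y"
proof -
  assume "Y \<in> Witt"
  then have "Y \<in> \<sigma> ` Witt" using bij_betw_imp_surj_on[OF s_bij] by simp
  then show ?thesis by (rule imageE) auto
qed
lemma s_add: "X \<in> Witt \<Longrightarrow> Y \<in> Witt \<Longrightarrow> \<sigma> (der_add X Y) = der_add (\<sigma> X) (\<sigma> Y)"
  using aut unfolding witt_lie_aut_def by blast
lemma s_scale: "X \<in> Witt \<Longrightarrow> \<sigma> (der_scale c X) = der_scale c (\<sigma> X)"
  using aut unfolding witt_lie_aut_def by blast
lemma s_br: "X \<in> Witt \<Longrightarrow> Y \<in> Witt \<Longrightarrow> \<sigma> (lie_bracket X Y) = lie_bracket (\<sigma> X) (\<sigma> Y)"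
  using aut unfolding witt_lie_aut_def by blast

lemma scale0: "der_scale 0 X = Z0" by (simp add: der_scale_def Z0_def)

lemma s_Z0: "\<sigma> Z0 = Z0"
proof -
  have "\<sigma> Z0 = \<sigma> (der_scale 0 Z0)" by (simp add: scale0)
  also have "\<dots> = der_scale 0 (\<sigma> Z0)" by (rule s_scale[OF Z0_Witt])
  finally show ?thesis by (simp add: scale0)
qed

lemma s_iter:
  assumes "X \<in> Witt" "Y \<in> Witt"
  shows "(lie_bracket X ^^ k) Y \<in> Witt \<and> (lie_bracket (\<sigma> X) ^^ k) (\<sigma> Y) = \<sigma> ((lie_bracket X ^^ k) Y)"
proof (induction k)
  case 0 then show ?case using assms by simp
next
  case (Suc k) then show ?case using assms by (simp add: bracket_Witt s_br)
qed

lemma s_sp: "X \<in> sp Z \<Longrightarrow> Z \<subseteq> Witt \<Longrightarrow> \<sigma> X \<in> sp (\<sigma> ` Z)"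
proof (induction X rule: sp.induct)
  case sp_Z0 then show ?case by (simp add: s_Z0 sp.sp_Z0)
next
  case (sp_base X) then show ?case by (simp add: sp.sp_base)
next
  case (sp_add X Y)
  have "X \<in> Witt" "Y \<in> Witt" using sp_Witt sp_add by blast+
  then show ?case using sp_add by (simp add: s_add sp.sp_add)
next
  case (sp_scale X c)
  have "X \<in> Witt" using sp_Witt sp_scale by blast
  then show ?case using sp_scale by (simp add: s_scale sp.sp_scale)
qed

lemma LF_sigma:
  assumes XW: "X \<in> Witt" and lf: "LF X" shows "LF (\<sigma> X)"
  unfolding LF_def
proof
  fix Y :: "('n, 'k) laurent \<Rightarrow> ('n, 'k) laurent" assume Y: "Y \<in> Witt"
  obtain Y' where Y': "Y' \<in> Witt" "\<sigma> Y' = Y" using s_surj[OF Y] by blast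
  obtain Z where Z: "finite Z" "Z \<subseteq> Witt" "\<And>k. (lie_bracket X ^^ k) Y' \<in> sp Z"
    using lf Y'(1) unfolding LF_def by blast
  have "(lie_bracket (\<sigma> X) ^^ k) Y \<in> sp (\<sigma> ` Z)" for k
    using s_iter[OF XW Y'(1), of k] s_sp[OF Z(3)[of k] Z(2)] Y'(2) by simp
  moreover have "\<sigma> ` Z \<subseteq> Witt" using Z(2) s_W by blast
  ultimately show "\<exists>Z. finite Z \<and> Z \<subseteq> Witt \<and> (\<forall>k. (lie_bracket (\<sigma> X) ^^ k) Y \<in> sp Z)"
    using Z(1) by blast
qed

lemma EV_fwd:
  assumes XW: "X \<in> Witt" and ev: "EV X" shows "EV (\<sigma> X)"
  unfolding EV_def
proof (intro ballI allI impI)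
  fix Y :: "('n, 'k) laurent \<Rightarrow> ('n, 'k) laurent" and c assume Y: "Y \<in> Witt" "Y \<noteq> Z0" and e: "lie_bracket (\<sigma> X) Y = der_scale c Y"
  obtain Y' where Y': "Y' \<in> Witt" "\<sigma> Y' = Y" using s_surj[OF Y(1)] by blast
  have "Y' \<noteq> Z0" using Y'(2) Y(2) s_Z0 by blast
  moreover have "lie_bracket X Y' = der_scale c Y'"
  proof (rule s_inj[OF bracket_Witt[OF XW Y'(1)] scale_Witt[OF Y'(1)]])
    show "\<sigma> (lie_bracket X Y') = \<sigma> (der_scale c Y')"
      using e Y' by (simp add: s_br[OF XW Y'(1)] s_scale)
  qed
  ultimately show "\<exists>m::int. c = of_int m" using ev Y'(1) unfolding EV_def by blast
qed

lemma EV_bwd: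
  assumes XW: "X \<in> Witt" and ev: "EV (\<sigma> X)" shows "EV X"
  unfolding EV_def
proof (intro ballI allI impI)
  fix Y :: "('n, 'k) laurent \<Rightarrow> ('n, 'k) laurent" and c assume Y: "Y \<in> Witt" "Y \<noteq> Z0" and e: "lie_bracket X Y = der_scale c Y"
  have "\<sigma> Y \<noteq> Z0" using s_inj[OF Y(1) Z0_Witt] Y(2) s_Z0 by metis
  moreover have "lie_bracket (\<sigma> X) (\<sigma> Y) = der_scale c (\<sigma> Y)"
    using e by (simp add: s_br[OF XW Y(1), symmetric] s_scale[OF Y(1), symmetric])
  ultimately show "\<exists>m::int. c = of_int m" using ev s_W[OF Y(1)] unfolding EV_def by blast
qed

lemma sigma_H:
  "\<exists>m :: 'n \<Rightarrow> int. \<sigma> (Hder i) = rep (\<lambda>j. lconst (of_int (m j)))"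
proof -
  define D where "D = \<sigma> (Hder i)"
  have DW: "D \<in> Witt" unfolding D_def by (rule s_W[OF Hder_Witt])
  have lf: "LF D" unfolding D_def by (rule LF_sigma[OF Hder_Witt LF_Hder])
  have Dc: "D = rep (\<lambda>j. lconst (lk (hc D j) 0))"
    by (rule Witt_const[OF DW const_of_LF[OF DW lf]])
  have ev: "EV D" unfolding D_def by (rule EV_fwd[OF Hder_Witt EV_Hder])
  have "\<forall>j. \<exists>m::int. lk (hc D j) 0 = of_int m"
    using EV_const[of "\<lambda>j. lk (hc D j) 0"] ev Dc by metis
  then obtain m where "\<forall>j. lk (hc D j) 0 = of_int (m j)" by metis
  then show ?thesis using Dc unfolding D_def by (intro exI[of _ m]) simp
qed

lemma sigma_sum:
  fixes d :: "'n \<Rightarrow> 'k"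
  shows "(\<lambda>f. \<Sum>j\<in>S. lconst (d j) * Hder j f) \<in> Witt \<and>
    \<sigma> (\<lambda>f. \<Sum>j\<in>S. lconst (d j) * Hder j f) = (\<lambda>f. \<Sum>j\<in>S. lconst (d j) * \<sigma> (Hder j) f)"
proof (induction S rule: infinite_finite_induct)
  case (infinite A) then show ?case using Z0_Witt s_Z0 by (simp add: Z0_def)
next
  case empty then show ?case using Z0_Witt s_Z0 by (simp add: Z0_def)
next
  case (insert x F)
  have e1: "(\<lambda>f. \<Sum>j\<in>insert x F. lconst (d j) * Hder j f) = der_add (der_scale (d x) (Hder x)) (\<lambda>f. \<Sum>j\<in>F. lconst (d j) * Hder j f)"
    using insert(1,2) by (simp add: der_add_def der_scale_def)
  have e2: "(\<lambda>f. \<Sum>j\<in>insert x F. lconst (d j) * \<sigma> (Hder j) f) = der_add (der_scale (d x) (\<sigma> (Hder x))) (\<lambda>f. \<Sum>j\<in>F. lconst (d j) * \<sigma> (Hder j) f)"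
    using insert(1,2) by (simp add: der_add_def der_scale_def)
  have IH: "(\<lambda>f. \<Sum>j\<in>F. lconst (d j) * Hder j f) \<in> Witt"
    "\<sigma> (\<lambda>f. \<Sum>j\<in>F. lconst (d j) * Hder j f) = (\<lambda>f. \<Sum>j\<in>F. lconst (d j) * \<sigma> (Hder j) f)"
    using insert(3) by blast+
  have W1: "der_scale (d x) (Hder x) \<in> Witt" by (rule scale_Witt[OF Hder_Witt])
  show ?case unfolding e1 e2
  proof
    show "der_add (der_scale (d x) (Hder x)) (\<lambda>f. \<Sum>j\<in>F. lconst (d j) * Hder j f) \<in> Witt"
      by (rule add_Witt[OF W1 IH(1)])
    show "\<sigma> (der_add (der_scale (d x) (Hder x)) (\<lambda>f. \<Sum>j\<in>F. lconst (d j) * Hder j f)) =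
      der_add (der_scale (d x) (\<sigma> (Hder x))) (\<lambda>f. \<Sum>j\<in>F. lconst (d j) * \<sigma> (Hder j) f)"
      unfolding s_add[OF W1 IH(1)] s_scale[OF Hder_Witt] IH(2) ..
  qed
qed

lemma hc_sum: "hc (\<lambda>f. \<Sum>j\<in>S. lconst (d j) * X j f) l = (\<Sum>j\<in>S. lconst (d j) * hc (X j) l)"
  by (simp add: hc_def sum_distrib_left mult.left_commute)

end




lemma H_const_comm:
  "lie_bracket (Hder k) (rep (\<lambda>j. lconst (d j))) = (Z0 :: ('n::finite, 'k::field) laurent \<Rightarrow> _)"
proof (rule Witt_eq[OF bracket_Witt[OF Hder_Witt rep_Witt] Z0_Witt])
  show "hc (lie_bracket (Hder k) (rep (\<lambda>j. lconst (d j)))) = hc (Z0 :: ('n, 'k) laurent \<Rightarrow> _)"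
    by (simp add: fun_eq_iff hc_bracket_H[OF rep_Witt] hc_rep Hder_lconst0 hc_Z0)
qed

lemma comm_const:
  fixes Y :: "('n::finite, 'k::field_char_0) laurent \<Rightarrow> _"
  assumes Y: "Y \<in> Witt" and c: "\<And>i. lie_bracket Y (Hder i) = Z0"
  shows "lk (hc Y j) x \<noteq> 0 \<Longrightarrow> x = 0"
proof -
  assume nz: "lk (hc Y j) x \<noteq> 0"
  have "lk x i = 0" for i
  proof -
    have "hc (lie_bracket Y (Hder i)) j = Y (hc (Hder i) j) - Hder i (hc Y j)"
      using hc_bracket[of Y "Hder i" j] Y rep_der[of "delta i"] by (simp add: Witt_iff flip: Hder_rep)
    also have "\<dots> = - Hder i (hc Y j)" by (simp add: hc_Hder der_delta[OF Y])
    finally have "Hder i (hc Y j) = 0" using c[of i] by (simp add: hc_Z0)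
    then have "of_int (lk x i) * lk (hc Y j) x = (0 :: 'k)"
      by (metis lookup_Hder lookup_zero)
    then show ?thesis using nz by simp
  qed
  then show "x = 0" by (intro poly_mapping_eqI) simp
qed

theorem corollary2p7:
  fixes \<sigma> :: "((('n::finite, 'k::field_char_0) laurent \<Rightarrow> ('n, 'k) laurent)
               \<Rightarrow> (('n, 'k) laurent \<Rightarrow> ('n, 'k) laurent))"
  assumes "witt_lie_aut \<sigma>"
  shows "\<exists>A :: int ^ 'n ^ 'n. invertible A \<and>
           (\<forall>i. \<sigma> (Hder i) = (\<lambda>f. \<Sum>j\<in>UNIV. lconst (of_int (A $ i $ j)) * Hder j f))"
proof -
  note aut = assms
  have "\<forall>i. \<exists>m :: 'n \<Rightarrow> int. \<sigma> (Hder i) = rep (\<lambda>j. lconst (of_int (m j)))"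
    using sigma_H[OF aut] by blast
  then obtain M :: "'n \<Rightarrow> 'n \<Rightarrow> int" where M: "\<And>i. \<sigma> (Hder i) = rep (\<lambda>j. lconst (of_int (M i j)))"
    by metis
  have inv: "\<exists>n :: 'n \<Rightarrow> int. \<forall>l. (\<Sum>j\<in>UNIV. n j * M j l) = (if k = l then 1 else 0)" for k
  proof -
    obtain Y where Y: "Y \<in> Witt" "\<sigma> Y = Hder k" using s_surj[OF aut Hder_Witt] by blast
    have comm: "lie_bracket Y (Hder i) = Z0" for i
    proof (rule s_inj[OF aut bracket_Witt[OF Y(1) Hder_Witt] Z0_Witt])
      show "\<sigma> (lie_bracket Y (Hder i)) = \<sigma> Z0"
        by (simp add: s_br[OF aut Y(1) Hder_Witt] Y(2) M H_const_comm s_Z0[OF aut])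
    qed
    have Yc: "Y = rep (\<lambda>j. lconst (lk (hc Y j) 0))"
      by (rule Witt_const[OF Y(1) comm_const[OF Y(1) comm]])
    have "EV (\<sigma> Y)" unfolding Y(2) by (rule EV_Hder)
    then have "EV Y" by (rule EV_bwd[OF aut Y(1)])
    then have "\<forall>j. \<exists>m::int. lk (hc Y j) 0 = of_int m"
      using EV_const[of "\<lambda>j. lk (hc Y j) 0"] Yc by metis
    then obtain n where n: "\<And>j. lk (hc Y j) 0 = of_int (n j)" by metis
    have "Hder k = \<sigma> (\<lambda>f. \<Sum>j\<in>UNIV. lconst (lk (hc Y j) 0) * Hder j f)"
      using Yc Y(2) by (simp add: rep_def)
    also have "\<dots> = (\<lambda>f. \<Sum>j\<in>UNIV. lconst (lk (hc Y j) 0) * \<sigma> (Hder j) f)"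
      using sigma_sum[OF aut, where d="\<lambda>j. lk (hc Y j) 0" and S=UNIV] by (rule conjunct2)
    finally have e: "Hder k = (\<lambda>f. \<Sum>j\<in>UNIV. lconst (of_int (n j)) * \<sigma> (Hder j) f)" by (simp add: n)
    have "(\<Sum>j\<in>UNIV. n j * M j l) = (if k = l then 1 else 0)" for l
    proof -
      have "hc (Hder k) l = (\<Sum>j\<in>UNIV. lconst (of_int (n j)) * hc (\<sigma> (Hder j)) l)"
        by (subst e) (rule hc_sum[OF aut])
      then have "delta k l = (\<Sum>j\<in>UNIV. lconst (of_int (n j)) * lconst (of_int (M j l)) :: ('n, 'k) laurent)"
        by (simp add: hc_Hder M hc_rep)
      then have "lk (delta k l) 0 = (\<Sum>j\<in>UNIV. of_int (n j) * of_int (M j l) :: 'k)"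
        by (simp add: lookup_sum lconst_mult lookup_lconst)
      then have "(of_int (if k = l then 1 else 0) :: 'k) = of_int (\<Sum>j\<in>UNIV. n j * M j l)"
        by (auto simp: delta_def of_int_sum)
      then show ?thesis by (simp only: of_int_eq_iff)
    qed
    then show ?thesis by blast
  qed
  then obtain N :: "'n \<Rightarrow> 'n \<Rightarrow> int" where N: "\<And>k l. (\<Sum>j\<in>UNIV. N k j * M j l) = (if k = l then 1 else 0)"
    by metis
  define A :: "int ^ 'n ^ 'n" where "A = (\<chi> i j. M i j)"
  define C :: "int ^ 'n ^ 'n" where "C = (\<chi> i j. N i j)"
  have CA: "C ** A = mat 1"
    by (simp add: vec_eq_iff matrix_matrix_mult_def mat_def A_def C_def N)
  have "invertible A" unfolding invertible_def using CA int_left_inv[OF CA] by blast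
  moreover have "\<forall>i. \<sigma> (Hder i) = (\<lambda>f. \<Sum>j\<in>UNIV. lconst (of_int (A $ i $ j)) * Hder j f)"
    by (simp add: M A_def rep_def)
  ultimately show ?thesis by blast
qed



end
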